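(* For integers $1\le N\le 50$, a $PCS_5^N$ exists if and only if $N=1$ or $N$ is divisible by $4$.
   Context: A binary sequence of length $N$ is a sequence $a=(a(0),\dots,a(N-1))$ with each $a(i)\in\{+1,-1\}$. Its periodic autocorrelation function is $\tilde\varphi_a(i)=\sum_{j=0}^{N-1}a(j)a(i+j \bmod N)$ for $0\le i<N$. A family $a_1,\dots,a_p$ of binary sequences, all of length $N$, is a $PCS_p^N$ (periodic complementary set) if $\sum_{k=1}^p\tilde\varphi_{a_k}(i)=0$ for all $0<i<N$. The sequences in a family need not be distinct. *)

theory Defs
  imports Main
begin

text \<open>A binary sequence of length N: values a 0, ..., a (N-1) in {+1,-1};
  values outside {0..<N} are irrelevant.\<close>
definition binary_seq :: "nat \<Rightarrow> (nat \<Rightarrow> int) \<Rightarrow> bool" where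
  "binary_seq N a \<longleftrightarrow> (\<forall>j<N. a j = 1 \<or> a j = -1)"

definition paf :: "nat \<Rightarrow> (nat \<Rightarrow> int) \<Rightarrow> nat \<Rightarrow> int" where
  "paf N a i = (\<Sum>j<N. a j * a ((i + j) mod N))"

definition is_PCS :: "nat \<Rightarrow> nat \<Rightarrow> (nat \<Rightarrow> nat \<Rightarrow> int) \<Rightarrow> bool" where
  "is_PCS p N a \<longleftrightarrow> (\<forall>k<p. binary_seq N (a k)) \<and>
     (\<forall>i. 0 < i \<and> i < N \<longrightarrow> (\<Sum>k<p. paf N (a k) i) = 0)"

definition PCS_exists :: "nat \<Rightarrow> nat \<Rightarrow> bool" where
  "PCS_exists p N \<longleftrightarrow> (\<exists>a. is_PCS p N a)"

end

theory Submission
  imports Defs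
begin



lemma pm1_prod_mod: "(x::int) = 1 \<or> x = -1 \<Longrightarrow> y = 1 \<or> y = -1 \<Longrightarrow> (x*y) mod 4 = (x + y - 1) mod 4"
  by auto

lemma shift_sum:
  fixes f :: "nat \<Rightarrow> int"
  assumes "i < N"
  shows "(\<Sum>j<N. f ((i + j) mod N)) = (\<Sum>j<N. f j)"
proof (rule sum.reindex_bij_witness[where i="\<lambda>j. (j + (N - i)) mod N" and j="\<lambda>j. (i + j) mod N"])
  fix a assume a: "a \<in> {..<N}"
  show "(a + (N - i)) mod N \<in> {..<N}" using a by auto
  show "(i + (a + (N - i)) mod N) mod N = a" using a assms
    by (metis add.commute add.left_commute le_add_diff_inverse less_imp_le_nat lessThan_iff mod_add_left_eq mod_add_self2 mod_less)
  show "f ((i + a) mod N) = f ((i + a) mod N)" by simp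
next
  fix a assume a: "a \<in> {..<N}"
  show "(i + a) mod N \<in> {..<N}" using a by auto
  show "((i + a) mod N + (N - i)) mod N = a" using a assms
    by (metis add.commute add.left_commute le_add_diff_inverse less_imp_le_nat lessThan_iff mod_add_left_eq mod_add_self2 mod_less)
qed

lemma odd_sum_mod2:
  assumes "binary_seq N a"
  shows "(\<Sum>j<N. a j) mod 2 = int N mod 2"
proof -
  have "(\<Sum>j<N. a j) mod 2 = (\<Sum>j<N. a j mod 2) mod 2" by (simp add: mod_sum_eq)
  also have "(\<Sum>j<N. a j mod 2) = (\<Sum>j<N. 1)"
    using assms unfolding binary_seq_def by (intro sum.cong) auto
  finally show ?thesis by simp
qed

lemma paf_mod4:
  assumes "binary_seq N a" "i < N"
  shows "paf N a i mod 4 = int N mod 4"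
proof -
  have N: "0 < N" using assms by simp
  have b: "\<And>j. j < N \<Longrightarrow> a j = 1 \<or> a j = -1" using assms unfolding binary_seq_def by auto
  have "paf N a i mod 4 = (\<Sum>j<N. (a j * a ((i + j) mod N)) mod 4) mod 4"
    unfolding paf_def by (simp add: mod_sum_eq)
  also have "(\<Sum>j<N. (a j * a ((i + j) mod N)) mod 4) = (\<Sum>j<N. (a j + a ((i + j) mod N) - 1) mod 4)"
    using N by (intro sum.cong refl pm1_prod_mod b) auto
  also have "\<dots> mod 4 = (\<Sum>j<N. (a j + a ((i + j) mod N) - 1)) mod 4"
    by (simp add: mod_sum_eq)
  also have "(\<Sum>j<N. (a j + a ((i + j) mod N) - 1)) = 2 * (\<Sum>j<N. a j) - int N"
    using shift_sum[OF assms(2), of a] by (simp add: sum.distrib sum_subtractf)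
  finally have 1: "paf N a i mod 4 = (2 * (\<Sum>j<N. a j) - int N) mod 4" .
  obtain q where q: "(\<Sum>j<N. a j) = int N + 2 * q"
    using odd_sum_mod2[OF assms(1)] by (metis mod_eqE mult.commute)
  have "(2 * (\<Sum>j<N. a j) - int N) mod 4 = (int N + 4 * q) mod 4" using q by (simp add: algebra_simps)
  also have "\<dots> = int N mod 4" by simp
  finally show ?thesis using 1 by simp
qed

lemma necessary:
  assumes "is_PCS 5 N a" "2 \<le> N"
  shows "4 dvd N"
proof -
  have z: "(\<Sum>k<5. paf N (a k) 1) = 0" using assms unfolding is_PCS_def by auto
  have "(\<Sum>k<5::nat. paf N (a k) 1) mod 4 = (\<Sum>k<5::nat. paf N (a k) 1 mod 4) mod 4"
    by (simp add: mod_sum_eq)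
  also have "(\<Sum>k<5::nat. paf N (a k) 1 mod 4) = (\<Sum>k<5::nat. int N mod 4)"
    using assms by (intro sum.cong refl paf_mod4) (auto simp: is_PCS_def)
  finally have "(5 * int N) mod 4 = 0" using z by (simp add: mod_mult_right_eq)
  hence "int N mod 4 = 0" by presburger
  thus ?thesis by presburger
qed

definition sgn_of :: "bool \<Rightarrow> int" where "sgn_of b = (if b then 1 else -1)"

definition cpaf :: "bool list \<Rightarrow> nat \<Rightarrow> int" where
  "cpaf xs i = sum_list (map2 (\<lambda>x y. sgn_of x * sgn_of y) xs (drop i xs @ take i xs))"

definition chk :: "nat \<Rightarrow> bool list list \<Rightarrow> bool" where
  "chk N L \<longleftrightarrow> length L = 5 \<and> list_all (\<lambda>xs. length xs = N) L \<and>
     list_all (\<lambda>i. sum_list (map (\<lambda>xs. cpaf xs i) L) = 0) [1..<N]"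

lemma cpaf_eq:
  assumes "length xs = N" "i < N"
  shows "paf N (\<lambda>j. sgn_of (xs ! j)) i = cpaf xs i"
proof -
  have r: "drop i xs @ take i xs = rotate i xs" using assms by (simp add: rotate_drop_take)
  show ?thesis unfolding cpaf_def r paf_def
    using assms by (simp add: sum_list_sum_nth nth_rotate add.commute atLeast0LessThan)
qed

lemma chk_PCS:
  assumes "chk N L"
  shows "PCS_exists 5 N"
proof -
  define a where "a = (\<lambda>k j. sgn_of (L ! k ! j))"
  have L5: "length L = 5"
    and z: "\<And>i. 0 < i \<Longrightarrow> i < N \<Longrightarrow> sum_list (map (\<lambda>xs. cpaf xs i) L) = 0"
    using assms unfolding chk_def list_all_iff by (auto simp: in_set_conv_nth)
  have len: "\<And>k. k < 5 \<Longrightarrow> length (L ! k) = N"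
    using assms L5 unfolding chk_def list_all_iff by (metis nth_mem)
  have "is_PCS 5 N a"
    unfolding is_PCS_def
  proof (intro conjI allI impI)
    fix k assume "k < (5::nat)" show "binary_seq N (a k)"
      unfolding binary_seq_def a_def sgn_of_def by auto
  next
    fix i assume i: "0 < i \<and> i < N"
    have "(\<Sum>k<5. paf N (a k) i) = (\<Sum>k<5. cpaf (L ! k) i)"
      unfolding a_def using i len by (intro sum.cong refl cpaf_eq) auto
    also have "\<dots> = sum_list (map (\<lambda>xs. cpaf xs i) L)"
      using L5 by (simp add: sum_list_sum_nth atLeast0LessThan)
    also have "\<dots> = 0" using z i by auto
    finally show "(\<Sum>k<5. paf N (a k) i) = 0" .
  qed
  thus ?thesis unfolding PCS_exists_def by blast
qed

lemma ex4: "PCS_exists 5 4"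
  by (rule chk_PCS[where L="[[False, False, False, True], [True, True, False, True], [True, True, True, False], [False, True, True, True], [False, True, True, True]]"]) code_simp

lemma ex8: "PCS_exists 5 8"
  by (rule chk_PCS[where L="[[False, True, False, True, True, True, False, True], [True, False, False, False, False, True, True, True], [False, True, True, True, True, False, True, True], [True, True, False, False, True, True, False, True], [True, True, False, True, True, True, True, False]]"]) code_simp

lemma ex12: "PCS_exists 5 12"
  by (rule chk_PCS[where L="[[True, True, True, True, False, True, True, False, True, False, False, True], [True, True, True, False, False, False, False, False, True, True, True, False], [True, True, False, True, False, True, False, True, False, False, False, False], [False, False, True, False, False, False, False, True, False, False, False, True], [False, False, True, True, False, True, True, False, True, True, True, False]]"]) code_simp

lemma ex16: "PCS_exists 5 16"
  by (rule chk_PCS[where L="[[False, True, False, True, False, False, False, True, False, False, False, False, True, False, False, True], [False, True, True, True, False, False, False, True, True, True, False, True, True, False, True, False], [False, True, False, True, True, False, True, True, True, False, True, True, False, False, False, False], [False, True, True, False, False, False, True, False, True, True, True, True, True, False, True, False], [True, False, False, False, False, False, False, False, True, True, False, True, False, False, False, True]]"]) code_simp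

lemma ex20: "PCS_exists 5 20"
  by (rule chk_PCS[where L="[[True, True, False, False, True, True, False, False, False, False, True, True, True, True, True, False, False, False, False, True], [True, False, True, False, False, True, True, False, False, True, False, True, True, False, True, True, True, True, False, True], [False, False, True, False, True, False, True, True, False, False, False, True, False, False, False, False, False, False, False, True], [False, True, True, False, True, False, True, False, True, False, False, False, False, False, True, False, False, True, True, False], [True, True, False, True, False, True, False, False, False, False, False, False, True, True, True, False, False, True, False, True]]"]) code_simp

lemma ex24: "PCS_exists 5 24"
  by (rule chk_PCS[where L="[[False, True, False, False, False, False, True, False, True, True, False, True, True, True, False, True, True, False, False, True, False, False, False, False], [True, False, False, False, False, True, False, True, True, True, False, False, False, False, False, False, True, False, False, False, False, True, True, False], [True, False, True, False, False, True, False, True, True, True, False, False, False, True, False, False, False, True, True, False, False, False, False, False], [True, True, True, False, False, False, True, False, True, False, False, True, True, False, False, True, False, False, True, False, True, False, True, True], [False, False, True, True, True, False, True, False, False, False, True, False, True, True, False, True, True, True, True, False, False, True, True, False]]"]) code_simp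

lemma ex28: "PCS_exists 5 28"
  by (rule chk_PCS[where L="[[False, False, True, True, True, True, False, False, True, False, False, True, True, True, False, False, True, False, False, False, True, False, True, False, False, False, False, False], [False, True, True, False, True, False, False, True, False, False, True, False, False, False, True, False, True, True, False, True, True, True, False, True, True, True, False, True], [True, True, True, False, False, False, False, False, False, False, True, False, True, True, False, True, False, True, False, False, True, False, False, False, True, False, True, False], [False, False, True, True, False, True, True, False, False, False, True, True, True, False, False, False, False, False, False, False, False, False, False, True, False, True, True, False], [True, True, False, False, False, True, False, True, False, False, True, True, False, False, True, True, False, True, False, False, False, True, True, True, False, False, True, True]]"]) code_simp

lemma ex32: "PCS_exists 5 32"
  by (rule chk_PCS[where L="[[True, True, True, False, True, True, True, False, True, False, True, False, True, True, False, True, False, False, True, False, True, True, True, True, True, False, False, False, False, True, False, False], [True, True, False, False, False, True, True, False, False, False, False, False, False, True, False, False, False, False, True, False, False, False, False, False, True, True, False, False, True, True, True, True], [False, True, False, True, True, False, True, True, True, True, False, True, True, True, True, True, False, False, True, False, True, True, True, True, True, True, False, False, False, False, False, True], [True, True, True, False, False, True, False, True, True, False, False, True, True, False, True, True, True, False, True, False, True, False, True, False, True, True, False, False, True, True, False, False], [False, True, False, True, False, True, True, False, False, False, False, True, True, False, True, True, False, True, True, False, True, True, False, False, False, False, True, True, True, False, False, True]]"]) code_simp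

lemma ex36: "PCS_exists 5 36"
  by (rule chk_PCS[where L="[[False, False, False, True, True, True, False, False, False, True, True, False, False, True, False, False, False, True, False, False, False, True, False, False, False, False, True, False, True, False, True, False, True, True, False, False], [False, True, False, True, True, True, False, False, False, True, True, True, False, True, True, False, False, True, True, True, True, True, False, True, False, False, False, False, True, True, False, True, False, False, True, False], [True, True, True, True, True, True, False, True, False, False, True, True, True, False, False, True, False, False, True, False, False, False, True, True, True, False, True, True, False, False, False, False, True, True, False, False], [False, False, True, False, False, False, True, True, True, False, True, True, False, True, False, False, False, False, False, False, True, False, False, True, False, True, False, False, True, False, True, True, True, False, True, False], [False, False, True, False, True, True, False, True, False, True, False, False, False, False, False, True, False, False, True, True, True, True, True, False, True, True, True, True, True, True, False, True, False, True, True, True]]"]) code_simp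

lemma ex40: "PCS_exists 5 40"
  by (rule chk_PCS[where L="[[True, False, False, False, True, False, False, True, False, True, False, False, False, False, True, False, False, True, False, False, False, True, False, True, False, False, False, True, True, False, False, False, True, False, False, True, True, True, True, True], [False, True, True, False, True, True, False, True, False, True, False, False, False, True, True, True, True, False, True, True, False, False, True, True, True, True, True, True, False, True, False, True, False, True, False, False, True, True, True, True], [True, True, False, True, False, True, True, True, True, False, False, True, False, False, False, False, False, False, False, False, True, True, False, True, True, False, True, False, False, True, False, False, True, False, False, True, True, False, False, True], [False, True, True, False, False, False, True, True, True, True, True, False, True, False, True, False, False, True, False, True, True, True, False, False, True, True, True, False, False, False, False, True, False, True, False, False, False, False, False, True], [False, False, False, True, False, True, False, True, True, True, False, False, True, True, False, False, True, True, True, True, True, False, False, False, False, False, True, True, False, True, False, False, True, True, False, False, False, False, False, True]]"]) code_simp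

lemma ex44: "PCS_exists 5 44"
  by (rule chk_PCS[where L="[[True, True, True, True, True, False, True, False, True, True, False, True, False, True, True, True, False, False, True, False, False, True, True, True, False, False, True, True, False, True, False, False, False, False, True, True, True, True, False, False, True, True, True, True], [True, False, True, False, True, False, True, True, False, False, True, False, True, True, False, False, True, True, True, False, False, False, True, False, False, True, True, False, False, True, False, True, False, False, True, True, False, True, False, False, False, False, False, False], [False, True, True, False, False, False, False, False, False, True, True, True, False, True, False, True, True, True, True, True, True, False, True, True, True, True, True, False, True, True, True, False, False, False, True, True, False, True, False, True, False, False, True, True], [True, True, False, False, True, True, False, True, True, True, True, False, True, False, True, False, True, False, False, False, False, False, False, False, True, False, True, True, True, True, False, True, False, False, True, False, False, False, True, True, False, False, True, False], [True, True, False, False, False, False, True, True, True, False, False, True, False, True, True, True, True, True, False, False, False, False, False, True, True, True, False, True, True, True, False, True, False, False, True, False, True, True, False, True, True, True, False, False]]"]) code_simp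

lemma ex48: "PCS_exists 5 48"
  by (rule chk_PCS[where L="[[False, True, False, False, True, True, False, True, False, True, False, False, False, False, True, False, True, True, True, True, True, True, False, True, True, True, False, True, False, False, False, False, True, False, True, False, True, False, False, True, True, True, False, False, False, True, False, True], [False, True, False, True, True, False, False, False, False, True, True, True, False, True, True, True, True, False, True, False, False, False, True, False, True, False, False, True, False, True, False, False, True, True, False, False, False, True, True, False, False, True, False, False, True, True, False, True], [True, False, False, False, False, True, False, True, True, False, True, True, False, False, True, True, False, True, False, False, False, True, True, True, False, False, True, False, False, True, False, True, True, True, True, True, True, False, False, True, False, True, True, True, False, True, True, True], [True, False, False, True, False, True, True, False, False, True, True, True, False, False, True, False, False, False, False, False, True, True, True, False, True, True, True, True, True, True, True, True, True, False, False, True, True, False, True, True, False, True, False, False, True, True, True, True], [True, False, True, True, True, True, False, False, True, False, True, False, True, True, False, False, True, False, False, True, True, False, False, False, True, True, False, False, False, True, True, True, True, True, True, True, False, True, True, True, True, True, True, True, True, False, False, False]]"]) code_simp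

lemma ex1: "PCS_exists 5 1"
  unfolding PCS_exists_def is_PCS_def binary_seq_def
  by (rule exI[where x="\<lambda>k j. 1"]) auto

theorem proposition4:
  fixes N :: nat
  assumes "1 \<le> N" and "N \<le> 50"
  shows "PCS_exists 5 N \<longleftrightarrow> (N = 1 \<or> 4 dvd N)"
proof
  assume "PCS_exists 5 N"
  then obtain a where a: "is_PCS 5 N a" unfolding PCS_exists_def by blast
  show "N = 1 \<or> 4 dvd N"
  proof (cases "N = 1")
    case False
    then have "2 \<le> N" using assms by simp
    then show ?thesis using necessary[OF a] by simp
  qed simp
next
  assume "N = 1 \<or> 4 dvd N"
  then show "PCS_exists 5 N"
  proof
    assume "4 dvd N"
    then obtain m where m: "N = 4 * m" by blast
    have "1 \<le> m" "m \<le> 12" using m assms by auto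
    then have "m = 1 \<or> m = 2 \<or> m = 3 \<or> m = 4 \<or> m = 5 \<or> m = 6 \<or> m = 7 \<or> m = 8 \<or> m = 9 \<or> m = 10 \<or> m = 11 \<or> m = 12" by presburger
    then show ?thesis using m ex4 ex8 ex12 ex16 ex20 ex24 ex28 ex32 ex36 ex40 ex44 ex48 by auto
  qed (use ex1 in simp)
qed

end
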